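(* Fix all parameters $p_B,p_E,m_B,m_E,K_{B,r},K_{E,r}$ ($r=1,2$) and $\bar\gamma_E$, and regard the average secrecy capacity $\bar C_s=\int_0^\infty\ln(1+\gamma)f_B(\gamma)F_E(\gamma)\,d\gamma+\int_0^\infty\ln(1+\gamma)f_E(\gamma)F_B(\gamma)\,d\gamma-\int_0^\infty\ln(1+\gamma)f_E(\gamma)\,d\gamma$ as a function of $\bar\gamma_B$. Then the high-SNR slope satisfies $$S_\infty:=\lim_{\bar\gamma_B\to\infty}\frac{\bar C_s}{\log_2\bar\gamma_B}=\ln 2,$$ independently of $m_\ell$, $K_{\ell,r}$ and $p_\ell$.
   Context: Setting. For each $\ell\in\{B,E\}$ (legitimate receiver $B$, eavesdropper $E$) fix parameters $p_\ell\in[0,1]$, $m_\ell>0$, $K_{\ell,1},K_{\ell,2}>0$ and $\bar\gamma_\ell>0$; put $\bar K_\ell=p_\ell K_{\ell,1}+(1-p_\ell)K_{\ell,2}$, $Q_{\ell,1}=p_\ell$, $Q_{\ell,2}=1-p_\ell$. For $r\in\{1,2\}$ and $\gamma\ge0$ let $f_{RS,\ell,r}(\gamma)=\frac{1+\bar K_\ell}{\bar\gamma_\ell}\big(\frac{m_\ell}{m_\ell+K_{\ell,r}}\big)^{m_\ell}\exp\big(-\frac{(1+\bar K_\ell)\gamma}{\bar\gamma_\ell}\big)\,{}_1F_1\big(m_\ell;1;\frac{K_{\ell,r}(1+\bar K_\ell)\gamma}{\bar\gamma_\ell(m_\ell+K_{\ell,r})}\big)$ and $F_{RS,\ell,r}(\gamma)=\int_0^\gamma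 f_{RS,\ell,r}(t)\,dt$, where ${}_1F_1$ is Kummer's confluent hypergeometric function. The Alternate Rician Shadowed (ARS) SNR $\gamma_\ell$ has density $f_\ell=Q_{\ell,1}f_{RS,\ell,1}+Q_{\ell,2}f_{RS,\ell,2}$ and CDF $F_\ell=Q_{\ell,1}F_{RS,\ell,1}+Q_{\ell,2}F_{RS,\ell,2}$ on $[0,\infty)$; $\gamma_B,\gamma_E$ are independent. Note $\bar C_s=\mathbb E[\max(\ln(1+\gamma_B)-\ln(1+\gamma_E),0)]$. *)

theory Defs
  imports "HOL-Analysis.Analysis"
begin

definition hyp1F1 :: "real \<Rightarrow> real \<Rightarrow> real \<Rightarrow> real" where
  "hyp1F1 a b z = (\<Sum>n. pochhammer a n / pochhammer b n * z ^ n / fact n)"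

definition Kbar :: "real \<Rightarrow> real \<Rightarrow> real \<Rightarrow> real" where
  "Kbar p K1 K2 = p * K1 + (1 - p) * K2"

definition fRS :: "real \<Rightarrow> real \<Rightarrow> real \<Rightarrow> real \<Rightarrow> real \<Rightarrow> real \<Rightarrow> real \<Rightarrow> real" where
  "fRS p m K1 K2 gbar Kr g =
     (1 + Kbar p K1 K2) / gbar * (m / (m + Kr)) powr m
     * exp (- (1 + Kbar p K1 K2) * g / gbar)
     * hyp1F1 m 1 (Kr * (1 + Kbar p K1 K2) * g / (gbar * (m + Kr)))"

definition FRS :: "real \<Rightarrow> real \<Rightarrow> real \<Rightarrow> real \<Rightarrow> real \<Rightarrow> real \<Rightarrow> real \<Rightarrow> real" where
  "FRS p m K1 K2 gbar Kr g = (LBINT t:{0..g}. fRS p m K1 K2 gbar Kr t)"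

definition ars_pdf :: "real \<Rightarrow> real \<Rightarrow> real \<Rightarrow> real \<Rightarrow> real \<Rightarrow> real \<Rightarrow> real" where
  "ars_pdf p m K1 K2 gbar g = p * fRS p m K1 K2 gbar K1 g + (1 - p) * fRS p m K1 K2 gbar K2 g"

definition ars_cdf :: "real \<Rightarrow> real \<Rightarrow> real \<Rightarrow> real \<Rightarrow> real \<Rightarrow> real \<Rightarrow> real" where
  "ars_cdf p m K1 K2 gbar g = p * FRS p m K1 K2 gbar K1 g + (1 - p) * FRS p m K1 K2 gbar K2 g"

definition avg_secrecy_capacity ::
  "real \<Rightarrow> real \<Rightarrow> real \<Rightarrow> real \<Rightarrow> real \<Rightarrow> real \<Rightarrow> real \<Rightarrow> real \<Rightarrow> real \<Rightarrow> real \<Rightarrow> real" where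
  "avg_secrecy_capacity pB mB KB1 KB2 gB pE mE KE1 KE2 gE =
     (LBINT g:{0..}. ln (1 + g) * ars_pdf pB mB KB1 KB2 gB g * ars_cdf pE mE KE1 KE2 gE g)
   + (LBINT g:{0..}. ln (1 + g) * ars_pdf pE mE KE1 KE2 gE g * ars_cdf pB mB KB1 KB2 gB g)
   - (LBINT g:{0..}. ln (1 + g) * ars_pdf pE mE KE1 KE2 gE g)"

end

theory Submission
  imports Defs "HOL-Probability.Distributions" "HOL-Real_Asymp.Real_Asymp"
begin


definition hterm :: "real \<Rightarrow> real \<Rightarrow> nat \<Rightarrow> real" where
  "hterm m z n = pochhammer m n / (fact n * fact n) * z ^ n"

lemma hyp1F1_eq: "hyp1F1 m 1 z = (\<Sum>n. hterm m z n)"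
  unfolding hyp1F1_def hterm_def by (simp add: pochhammer_fact[symmetric] field_simps)

lemma hterm_summable:
  assumes "0 < m" shows "summable (hterm m z)"
proof (rule summable_ratio_test[where c="1/2" and N="nat \<lceil>2*(m+1)*(\<bar>z\<bar>+1)\<rceil>"])
  fix n assume n: "nat \<lceil>2*(m+1)*(\<bar>z\<bar>+1)\<rceil> \<le> n"
  have n1: "2*(m+1)*(\<bar>z\<bar>+1) \<le> real n + 1" using n by linarith
  have eq: "hterm m z (Suc n) = hterm m z n * ((m + n) * z / ((n+1)*(n+1)))"
    unfolding hterm_def by (simp add: pochhammer_Suc field_simps)
  have pos: "0 \<le> pochhammer m n" using assms by (simp add: pochhammer_nonneg)
  have key: "(m + n) * \<bar>z\<bar> \<le> 1/2 * ((n+1)*(n+1))"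
  proof -
    have "(m + n) * \<bar>z\<bar> \<le> (m+1)*(n+1)*\<bar>z\<bar>"
      using assms by (intro mult_right_mono) (auto simp: algebra_simps)
    also have "\<dots> \<le> (n+1) * ((m+1)*(\<bar>z\<bar>+1))"
      using assms by (simp add: algebra_simps)
    also have "\<dots> \<le> (n+1) * ((n+1)/2)"
      using n1 by (intro mult_left_mono) (auto simp: algebra_simps)
    finally show ?thesis by (simp add: algebra_simps)
  qed
  have "norm (hterm m z (Suc n)) = norm (hterm m z n) * ((m + n) * \<bar>z\<bar> / ((n+1)*(n+1)))"
    unfolding eq using assms by (simp add: abs_mult)
  also have "\<dots> \<le> norm (hterm m z n) * (1/2)"
  proof (intro mult_left_mono)
    have p: "0 < real ((n+1)*(n+1))" by (simp only: of_nat_0_less_iff) simp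
    show "(m + n) * \<bar>z\<bar> / ((n+1)*(n+1)) \<le> 1/2"
      using key p by (metis pos_divide_le_eq mult.commute)
  qed simp
  finally show "norm (hterm m z (Suc n)) \<le> 1/2 * norm (hterm m z n)" by simp
qed simp

lemma hterm_nonneg: "0 < m \<Longrightarrow> 0 \<le> z \<Longrightarrow> 0 \<le> hterm m z n"
  unfolding hterm_def by (auto intro!: mult_nonneg_nonneg divide_nonneg_nonneg pochhammer_nonneg)

lemma hyp_nonneg: "0 < m \<Longrightarrow> 0 \<le> z \<Longrightarrow> 0 \<le> hyp1F1 m 1 z"
  unfolding hyp1F1_eq by (intro suminf_nonneg hterm_summable hterm_nonneg) auto

lemma hyp_mono: assumes "0 < m" "0 \<le> z" "z \<le> w" shows "hyp1F1 m 1 z \<le> hyp1F1 m 1 w"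
  unfolding hyp1F1_eq
proof (intro suminf_le hterm_summable assms(1))
  fix n show "hterm m z n \<le> hterm m w n"
    unfolding hterm_def using assms
    by (intro mult_left_mono power_mono divide_nonneg_nonneg pochhammer_nonneg) auto
qed

lemma hyp_meas[measurable]: "(\<lambda>x. hyp1F1 m 1 (f x)) \<in> borel_measurable borel" if [measurable]: "f \<in> borel_measurable borel"
  unfolding hyp1F1_def by measurable



lemma exp_moment:
  assumes "0 < l"
  shows "(\<integral>\<^sup>+x. ennreal (x^n * exp (-l*x)) * indicator {0..} x \<partial>lborel) = ennreal (fact n / l^(Suc n))"
proof -
  have "(\<integral>\<^sup>+x. ennreal (x^n * exp (-l*x)) * indicator {0..} x \<partial>lborel)
      = (\<integral>\<^sup>+x. ennreal (1/l) * ennreal (erlang_density 0 l x * x ^ n) \<partial>lborel)"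
    using assms by (intro nn_integral_cong) (auto simp: erlang_density_def ennreal_mult'[symmetric] split: split_indicator)
  also have "\<dots> = ennreal (1/l) * (\<integral>\<^sup>+x. ennreal (erlang_density 0 l x * x ^ n) \<partial>lborel)"
    by (intro nn_integral_cmult) auto
  also have "\<dots> = ennreal (1/l) * ennreal (fact n / l^n)"
    using nn_integral_erlang_ith_moment[OF assms, of 0 n] by simp
  also have "\<dots> = ennreal (fact n / l^(Suc n))"
    using assms by (simp add: ennreal_mult'[symmetric] field_simps)
  finally show ?thesis .
qed

lemma core:
  assumes m: "0 < m" and l: "0 < l" and b: "0 \<le> b" "b < l"
  shows "(\<integral>\<^sup>+x. ennreal (exp (-l*x) * hyp1F1 m 1 (b*x)) * indicator {0..} x \<partial>lborel)
       = ennreal ((1/l) * (1 - b/l) powr (-m))"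
proof -
  define t where "t n x = ennreal (exp (-l*x) * hterm m (b*x) n) * indicator {0..} x" for n x
  have pt: "ennreal (exp (-l*x) * hyp1F1 m 1 (b*x)) * indicator {0..} x = (\<Sum>n. t n x)" for x
  proof (cases "0 \<le> x")
    case True
    have s: "summable (\<lambda>n. exp (-l*x) * hterm m (b*x) n)"
      by (intro summable_mult hterm_summable m)
    have h: "exp (-l*x) * hyp1F1 m 1 (b*x) = (\<Sum>n. exp (-l*x) * hterm m (b*x) n)"
      unfolding hyp1F1_eq by (intro suminf_mult[symmetric] hterm_summable m)
    have e: "ennreal (\<Sum>n. exp (-l*x) * hterm m (b*x) n) = (\<Sum>n. ennreal (exp (-l*x) * hterm m (b*x) n))"
      using True b m by (intro suminf_ennreal2[OF _ s, symmetric] mult_nonneg_nonneg hterm_nonneg) auto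
    show ?thesis using True unfolding t_def h e by simp
  next
    case False then show ?thesis by (simp add: t_def)
  qed
  have tm: "t n \<in> borel_measurable lborel" for n
    unfolding t_def hterm_def by measurable
  have ti: "integral\<^sup>N lborel (t n) = ennreal (pochhammer m n / fact n * (b/l)^n * (1/l))" for n
  proof -
    have "integral\<^sup>N lborel (t n) = (\<integral>\<^sup>+x. ennreal (pochhammer m n / (fact n * fact n) * b^n) *
        (ennreal (x^n * exp (-l*x)) * indicator {0..} x) \<partial>lborel)"
    proof (intro nn_integral_cong)
      fix x
      have pn: "0 \<le> pochhammer m n / (fact n * fact n) * b^n"
        using m b by (auto intro!: mult_nonneg_nonneg divide_nonneg_nonneg pochhammer_nonneg)
      show "t n x = ennreal (pochhammer m n / (fact n * fact n) * b^n) *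
        (ennreal (x^n * exp (-l*x)) * indicator {0..} x)"
        unfolding t_def hterm_def ennreal_mult'[OF pn, symmetric] mult.assoc[symmetric]
        by (auto simp: power_mult_distrib ac_simps split: split_indicator)
    qed
    also have "\<dots> = ennreal (pochhammer m n / (fact n * fact n) * b^n) * ennreal (fact n / l^(Suc n))"
      by (subst nn_integral_cmult, simp, subst exp_moment[OF l], rule refl)
    also have "\<dots> = ennreal (pochhammer m n / fact n * (b/l)^n * (1/l))"
    proof -
      have pn: "0 \<le> pochhammer m n / (fact n * fact n) * b^n"
        using m b by (auto intro!: mult_nonneg_nonneg divide_nonneg_nonneg pochhammer_nonneg)
      have r: "pochhammer m n / (fact n * fact n) * b^n * (fact n / l^(Suc n)) = pochhammer m n / fact n * (b/l)^n * (1/l)"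
        using l by (simp add: power_divide)
      show ?thesis unfolding ennreal_mult'[OF pn, symmetric] r ..
    qed
    finally show ?thesis .
  qed
  have sums: "(\<lambda>n. pochhammer m n / fact n * (b/l)^n * (1/l)) sums ((1 - b/l) powr (-m) * (1/l))"
  proof -
    have "\<bar>- (b/l)\<bar> < 1" using b l by auto
    from gen_binomial_real[OF this, of "-m"]
    have "(\<lambda>n. ((-m) gchoose n) * (- (b/l))^n) sums (1 + - (b/l)) powr (-m)" .
    moreover have "((-m) gchoose n) * (- (b/l))^n = pochhammer m n / fact n * (b/l)^n" for n
    proof -
      have "((-m) gchoose n) * (- (b/l))^n = ((-1)^n * pochhammer m n / fact n) * ((-1)^n * (b/l)^n)"
        by (subst gbinomial_pochhammer, subst power_minus, simp only: minus_minus)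
      also have "\<dots> = ((-1)^n * (-1)^n) * (pochhammer m n / fact n * (b/l)^n)" by (simp add: ac_simps)
      also have "(-1::real)^n * (-1)^n = 1" by (simp flip: power_mult_distrib)
      finally show ?thesis by simp
    qed
    ultimately have "(\<lambda>n. pochhammer m n / fact n * (b/l)^n) sums (1 - b/l) powr (-m)" by simp
    then show ?thesis by (rule sums_mult2)
  qed
  have "(\<integral>\<^sup>+x. ennreal (exp (-l*x) * hyp1F1 m 1 (b*x)) * indicator {0..} x \<partial>lborel) = (\<integral>\<^sup>+x. (\<Sum>n. t n x) \<partial>lborel)"
    by (intro nn_integral_cong) (rule pt)
  also have "\<dots> = (\<Sum>n. integral\<^sup>N lborel (t n))"
    by (rule nn_integral_suminf[OF tm])
  also have "\<dots> = ennreal ((1 - b/l) powr (-m) * (1/l))"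
    unfolding ti using m b l
    by (intro suminf_ennreal_eq[OF _ sums]) (auto intro!: mult_nonneg_nonneg divide_nonneg_nonneg pochhammer_nonneg)
  finally show ?thesis by (simp add: mult.commute)
qed



definition dens :: "(real \<Rightarrow> real) \<Rightarrow> bool" where
  "dens \<phi> \<longleftrightarrow> \<phi> \<in> borel_measurable borel \<and> (\<forall>g\<ge>0. 0 \<le> \<phi> g) \<and> set_integrable lborel {0..} \<phi>
     \<and> (LBINT g:{0..}. \<phi> g) = 1 \<and> set_integrable lborel {0..} (\<lambda>g. g * \<phi> g)"

lemma set_integral_nonneg:
  fixes f :: "'a \<Rightarrow> real"
  shows "(\<And>x. x \<in> A \<Longrightarrow> 0 \<le> f x) \<Longrightarrow> 0 \<le> (LINT x:A|M. f x)"
  unfolding set_lebesgue_integral_def by (intro integral_nonneg_AE AE_I2) (auto split: split_indicator)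

lemma dens_meas: "dens \<phi> \<Longrightarrow> \<phi> \<in> borel_measurable borel" by (simp add: dens_def)
lemma dens_nonneg: "dens \<phi> \<Longrightarrow> 0 \<le> g \<Longrightarrow> 0 \<le> \<phi> g" by (simp add: dens_def)
lemma dens_int: "dens \<phi> \<Longrightarrow> set_integrable lborel {0..} \<phi>" by (simp add: dens_def)
lemma dens_one: "dens \<phi> \<Longrightarrow> (LBINT g:{0..}. \<phi> g) = 1" by (simp add: dens_def)
lemma dens_mom: "dens \<phi> \<Longrightarrow> set_integrable lborel {0..} (\<lambda>g. g * \<phi> g)" by (simp add: dens_def)

lemma dens_int_Icc: "dens \<phi> \<Longrightarrow> set_integrable lborel {0..x} \<phi>"
  by (rule set_integrable_subset[OF dens_int]) auto

lemma cdf_mono_gen: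
  assumes "dens \<phi>" "A \<subseteq> {0..}" "B \<subseteq> {0..}" "A \<subseteq> B" "A \<in> sets lborel" "B \<in> sets lborel"
  shows "(LBINT t:A. \<phi> t) \<le> (LBINT t:B. \<phi> t)"
proof -
  have iA: "set_integrable lborel A \<phi>" by (rule set_integrable_subset[OF dens_int[OF assms(1)]]) (use assms in auto)
  have iB: "set_integrable lborel B \<phi>" by (rule set_integrable_subset[OF dens_int[OF assms(1)]]) (use assms in auto)
  show ?thesis using iA iB unfolding set_integrable_def set_lebesgue_integral_def
    by (intro integral_mono) (use assms dens_nonneg[OF assms(1)] in \<open>auto split: split_indicator\<close>)
qed

lemma cdf_mono: "dens \<phi> \<Longrightarrow> x \<le> y \<Longrightarrow> (LBINT t:{0..x}. \<phi> t) \<le> (LBINT t:{0..y}. \<phi> t)"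
  by (rule cdf_mono_gen) auto

lemma cdf_le1: "dens \<phi> \<Longrightarrow> (LBINT t:{0..x}. \<phi> t) \<le> 1"
  using cdf_mono_gen[of \<phi> "{0..x}" "{0..}"] dens_one[of \<phi>] by auto

lemma cdf_nonneg: "dens \<phi> \<Longrightarrow> 0 \<le> (LBINT t:{0..x}. \<phi> t)"
  by (rule set_integral_nonneg) (auto simp: dens_nonneg)

lemma cdf_meas: "dens \<phi> \<Longrightarrow> (\<lambda>x. LBINT t:{0..x}. \<phi> t) \<in> borel_measurable borel"
  by (rule borel_measurable_mono) (auto simp: mono_def cdf_mono)

lemma dens_log_int:
  assumes "dens \<phi>"
  shows "set_integrable lborel {0..} (\<lambda>g. ln (1+g) * \<phi> g)"
proof -
  have "integrable lborel (\<lambda>g. indicator {0..} g *\<^sub>R (ln (1+g) * \<phi> g))"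
  proof (rule Bochner_Integration.integrable_bound[OF dens_mom[OF assms, unfolded set_integrable_def]])
    show "(\<lambda>g. indicator {0..} g *\<^sub>R (ln (1+g) * \<phi> g)) \<in> borel_measurable lborel"
    proof -
      have [measurable]: "\<phi> \<in> borel_measurable borel" using assms by (rule dens_meas)
      show ?thesis by measurable
    qed
    show "AE x in lborel. norm (indicator {0..} x *\<^sub>R (ln (1+x) * \<phi> x)) \<le> norm (indicator {0..} x *\<^sub>R (x * \<phi> x))"
    proof (intro AE_I2)
      fix x show "norm (indicator {0..} x *\<^sub>R (ln (1+x) * \<phi> x)) \<le> norm (indicator {0..} x *\<^sub>R (x * \<phi> x))"
      proof (cases "0 \<le> x")
        case True
        have "ln (1+x) \<le> x" by (rule ln_add_one_self_le_self[OF True])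
        moreover have "0 \<le> ln (1+x)" using True by simp
        ultimately show ?thesis using True dens_nonneg[OF assms True]
          by (simp add: abs_mult mult_right_mono)
      qed simp
    qed
  qed
  then show ?thesis unfolding set_integrable_def .
qed

lemma dens_log_nonneg: "dens \<phi> \<Longrightarrow> 0 \<le> (LBINT g:{0..}. ln (1+g) * \<phi> g)"
  by (rule set_integral_nonneg) (auto simp: dens_nonneg)



lemma split_int:
  fixes f :: "real \<Rightarrow> real"
  assumes i: "set_integrable lborel {0..} f" and x: "0 \<le> x"
  shows "(LBINT g:{0..}. f g) = (LBINT g:{0..x}. f g) + (LBINT g:{x<..}. f g)"
proof -
  have U: "{0..} = {0..x} \<union> {x<..}" using x by auto
  have "(LBINT g:{0..x} \<union> {x<..}. f g) = (LBINT g:{0..x}. f g) + (LBINT g:{x<..}. f g)"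
    by (rule set_integral_Un) (auto intro!: set_integrable_subset[OF i] intro: order.trans[OF x] less_imp_le)
  then show ?thesis using U by simp
qed

lemma tail_bound:
  assumes dE: "dens \<phi>" and x: "0 \<le> x"
  shows "ln (1+x) - (LBINT g:{0..}. ln (1+g) * \<phi> g) \<le> ln (1+x) * (LBINT t:{0..x}. \<phi> t)"
proof -
  have iL: "set_integrable lborel {0..} (\<lambda>g. ln (1+g) * \<phi> g)" by (rule dens_log_int[OF dE])
  have i2: "set_integrable lborel {x<..} \<phi>"
    by (rule set_integrable_subset[OF dens_int[OF dE]]) (use x in auto)
  have iL2: "set_integrable lborel {x<..} (\<lambda>g. ln (1+g) * \<phi> g)"
    by (rule set_integrable_subset[OF iL]) (use x in auto)
  have s1: "1 = (LBINT t:{0..x}. \<phi> t) + (LBINT t:{x<..}. \<phi> t)"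
    using split_int[OF dens_int[OF dE] x] dens_one[OF dE] by simp
  have s2: "(LBINT g:{0..}. ln (1+g) * \<phi> g) = (LBINT g:{0..x}. ln (1+g) * \<phi> g) + (LBINT g:{x<..}. ln (1+g) * \<phi> g)"
    by (rule split_int[OF iL x])
  have n1: "0 \<le> (LBINT g:{0..x}. ln (1+g) * \<phi> g)"
    by (rule set_integral_nonneg) (auto simp: dens_nonneg[OF dE])
  have "ln (1+x) * (LBINT t:{x<..}. \<phi> t) = (LBINT t:{x<..}. ln (1+x) * \<phi> t)" by simp
  also have "\<dots> \<le> (LBINT g:{x<..}. ln (1+g) * \<phi> g)"
  proof (rule set_integral_mono)
    show "set_integrable lborel {x<..} (\<lambda>t. ln (1 + x) * \<phi> t)" using i2 by auto
    show "set_integrable lborel {x<..} (\<lambda>g. ln (1+g) * \<phi> g)" by (rule iL2)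
    fix t assume "t \<in> {x<..}"
    then have t: "x < t" by simp
    then show "ln (1 + x) * \<phi> t \<le> ln (1 + t) * \<phi> t"
      using x dens_nonneg[OF dE, of t] by (intro mult_right_mono) auto
  qed
  finally have "ln (1+x) * (LBINT t:{x<..}. \<phi> t) \<le> (LBINT g:{x<..}. ln (1+g) * \<phi> g)" .
  moreover have "ln (1+x) = ln (1+x) * (LBINT t:{0..x}. \<phi> t) + ln (1+x) * (LBINT t:{x<..}. \<phi> t)"
    using s1 by (metis distrib_left mult.right_neutral)
  ultimately show ?thesis using s2 n1 by linarith
qed

lemma I2_bounds:
  assumes dE: "dens \<phi>" and dB: "dens \<psi>"
  shows "set_integrable lborel {0..} (\<lambda>g. ln (1+g) * \<phi> g * (LBINT t:{0..g}. \<psi> t))"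
    and "0 \<le> (LBINT g:{0..}. ln (1+g) * \<phi> g * (LBINT t:{0..g}. \<psi> t))"
    and "(LBINT g:{0..}. ln (1+g) * \<phi> g * (LBINT t:{0..g}. \<psi> t)) \<le> (LBINT g:{0..}. ln (1+g) * \<phi> g)"
proof -
  have iL: "set_integrable lborel {0..} (\<lambda>g. ln (1+g) * \<phi> g)" by (rule dens_log_int[OF dE])
  show i: "set_integrable lborel {0..} (\<lambda>g. ln (1+g) * \<phi> g * (LBINT t:{0..g}. \<psi> t))"
    unfolding set_integrable_def
  proof (rule Bochner_Integration.integrable_bound[OF iL[unfolded set_integrable_def]])
    show "(\<lambda>g. indicator {0..} g *\<^sub>R (ln (1+g) * \<phi> g * (LBINT t:{0..g}. \<psi> t))) \<in> borel_measurable lborel"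
    proof -
      have [measurable]: "\<phi> \<in> borel_measurable borel" using dE by (rule dens_meas)
      have [measurable]: "(\<lambda>x. LBINT t:{0..x}. \<psi> t) \<in> borel_measurable borel" using dB by (rule cdf_meas)
      show ?thesis by measurable
    qed
    show "AE x in lborel. norm (indicator {0..} x *\<^sub>R (ln (1+x) * \<phi> x * (LBINT t:{0..x}. \<psi> t)))
        \<le> norm (indicator {0..} x *\<^sub>R (ln (1+x) * \<phi> x))"
    proof (intro AE_I2)
      fix x show "norm (indicator {0..} x *\<^sub>R (ln (1+x) * \<phi> x * (LBINT t:{0..x}. \<psi> t)))
        \<le> norm (indicator {0..} x *\<^sub>R (ln (1+x) * \<phi> x))"
      proof (cases "0 \<le> x")
        case True
        have "0 \<le> ln (1+x) * \<phi> x" using True dens_nonneg[OF dE True] by simp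
        then show ?thesis using True cdf_nonneg[OF dB, of x] cdf_le1[OF dB, of x]
          by (simp add: abs_mult mult_left_le)
      qed simp
    qed
  qed
  show "0 \<le> (LBINT g:{0..}. ln (1+g) * \<phi> g * (LBINT t:{0..g}. \<psi> t))"
    by (rule set_integral_nonneg) (auto intro!: mult_nonneg_nonneg dens_nonneg[OF dE] cdf_nonneg[OF dB])
  show "(LBINT g:{0..}. ln (1+g) * \<phi> g * (LBINT t:{0..g}. \<psi> t)) \<le> (LBINT g:{0..}. ln (1+g) * \<phi> g)"
    using i iL
  proof (rule set_integral_mono)
    fix g :: real assume "g \<in> {0..}"
    then have g: "0 \<le> g" by simp
    have "0 \<le> ln (1+g) * \<phi> g" using g dens_nonneg[OF dE g] by simp
    then show "ln (1+g) * \<phi> g * (LBINT t:{0..g}. \<psi> t) \<le> ln (1+g) * \<phi> g"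
      using cdf_le1[OF dB, of g] by (simp add: mult_left_le)
  qed
qed

lemma I1_bounds:
  assumes dB: "dens \<phi>" and dE: "dens \<psi>"
  shows "set_integrable lborel {0..} (\<lambda>g. ln (1+g) * \<phi> g * (LBINT t:{0..g}. \<psi> t))"
    and "(LBINT g:{0..}. ln (1+g) * \<phi> g * (LBINT t:{0..g}. \<psi> t)) \<le> (LBINT g:{0..}. ln (1+g) * \<phi> g)"
    and "(LBINT g:{0..}. ln (1+g) * \<phi> g) - (LBINT g:{0..}. ln (1+g) * \<psi> g)
         \<le> (LBINT g:{0..}. ln (1+g) * \<phi> g * (LBINT t:{0..g}. \<psi> t))"
proof -
  show i: "set_integrable lborel {0..} (\<lambda>g. ln (1+g) * \<phi> g * (LBINT t:{0..g}. \<psi> t))"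
    and "(LBINT g:{0..}. ln (1+g) * \<phi> g * (LBINT t:{0..g}. \<psi> t)) \<le> (LBINT g:{0..}. ln (1+g) * \<phi> g)"
    using I2_bounds[OF dB dE] by auto
  define J where "J = (LBINT g:{0..}. ln (1+g) * \<psi> g)"
  have iL: "set_integrable lborel {0..} (\<lambda>g. ln (1+g) * \<phi> g)" by (rule dens_log_int[OF dB])
  have iJ: "set_integrable lborel {0..} (\<lambda>g. J * \<phi> g)" using dens_int[OF dB] by auto
  have "(LBINT g:{0..}. ln (1+g) * \<phi> g) - J = (LBINT g:{0..}. ln (1+g) * \<phi> g) - (LBINT g:{0..}. J * \<phi> g)"
    using dens_one[OF dB] by simp
  also have "\<dots> = (LBINT g:{0..}. ln (1+g) * \<phi> g - J * \<phi> g)"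
    by (rule set_integral_diff(2)[OF iL iJ, symmetric])
  also have "\<dots> \<le> (LBINT g:{0..}. ln (1+g) * \<phi> g * (LBINT t:{0..g}. \<psi> t))"
  proof (rule set_integral_mono)
    show "set_integrable lborel {0..} (\<lambda>g. ln (1+g) * \<phi> g - J * \<phi> g)"
      by (rule set_integral_diff(1)[OF iL iJ])
    show "set_integrable lborel {0..} (\<lambda>g. ln (1+g) * \<phi> g * (LBINT t:{0..g}. \<psi> t))" by (rule i)
    fix g :: real assume "g \<in> {0..}"
    then have g: "0 \<le> g" by simp
    have "(ln (1+g) - J) * \<phi> g \<le> (ln (1+g) * (LBINT t:{0..g}. \<psi> t)) * \<phi> g"
      using tail_bound[OF dE g] dens_nonneg[OF dB g] unfolding J_def by (intro mult_right_mono) auto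
    then show "ln (1+g) * \<phi> g - J * \<phi> g \<le> ln (1+g) * \<phi> g * (LBINT t:{0..g}. \<psi> t)"
      by (simp add: algebra_simps)
  qed
  finally show "(LBINT g:{0..}. ln (1+g) * \<phi> g) - (LBINT g:{0..}. ln (1+g) * \<psi> g)
         \<le> (LBINT g:{0..}. ln (1+g) * \<phi> g * (LBINT t:{0..g}. \<psi> t))" unfolding J_def .
qed



lemma ln_split_bound:
  fixes g gb :: real assumes g: "0 \<le> g" and gb: "0 < gb"
  shows "ln (1+g) \<le> ln (1+gb) + g / gb"
proof -
  have "1 + g \<le> (1+gb) * (1 + g/gb)" using g gb by (simp add: field_simps)
  then have "ln (1+g) \<le> ln ((1+gb) * (1 + g/gb))" using g by (subst ln_le_cancel_iff) auto
  also have "\<dots> = ln (1+gb) + ln (1 + g/gb)"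
  proof -
    have "0 < 1 + g/gb" using g gb by (simp add: add_pos_nonneg)
    then show ?thesis using gb by (simp add: ln_mult)
  qed
  also have "ln (1 + g/gb) \<le> g/gb" using g gb by (intro ln_add_one_self_le_self) simp
  finally show ?thesis by simp
qed

lemma A_upper:
  assumes d: "dens \<phi>" and gb: "0 < gb" and M: "(LBINT g:{0..}. g * \<phi> g) \<le> M * gb"
  shows "(LBINT g:{0..}. ln (1+g) * \<phi> g) \<le> ln (1+gb) + M"
proof -
  have i1: "set_integrable lborel {0..} (\<lambda>g. ln (1+gb) * \<phi> g)" using dens_int[OF d] by auto
  have i2: "set_integrable lborel {0..} (\<lambda>g. (1/gb) * (g * \<phi> g))" using dens_mom[OF d] by auto
  have "(LBINT g:{0..}. ln (1+g) * \<phi> g) \<le> (LBINT g:{0..}. ln (1+gb) * \<phi> g + (1/gb) * (g * \<phi> g))"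
  proof (rule set_integral_mono)
    show "set_integrable lborel {0..} (\<lambda>g. ln (1+g) * \<phi> g)" by (rule dens_log_int[OF d])
    show "set_integrable lborel {0..} (\<lambda>g. ln (1+gb) * \<phi> g + (1/gb) * (g * \<phi> g))"
      by (rule set_integral_add(1)[OF i1 i2])
    fix g :: real assume "g \<in> {0..}" then have g: "0 \<le> g" by simp
    have "ln (1+g) * \<phi> g \<le> (ln (1+gb) + g/gb) * \<phi> g"
      using ln_split_bound[OF g gb] dens_nonneg[OF d g] by (rule mult_right_mono)
    then show "ln (1+g) * \<phi> g \<le> ln (1+gb) * \<phi> g + (1/gb) * (g * \<phi> g)"
      by (simp add: algebra_simps)
  qed
  also have "\<dots> = ln (1+gb) * 1 + (1/gb) * (LBINT g:{0..}. g * \<phi> g)"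
    using set_integral_add(2)[OF i1 i2] dens_one[OF d] by simp
  also have "\<dots> \<le> ln (1+gb) + (1/gb) * (M * gb)"
    using M gb by (simp add: pos_divide_le_eq)
  also have "\<dots> = ln (1+gb) + M" using gb by simp
  finally show ?thesis .
qed

lemma A_lower:
  assumes d: "dens \<phi>" and gb: "0 < gb" and L: "1 \<le> ln gb"
    and D: "\<And>g. 0 \<le> g \<Longrightarrow> g \<le> gb \<Longrightarrow> \<phi> g \<le> D / gb"
  shows "ln (gb / ln gb) * (1 - D / ln gb) \<le> (LBINT g:{0..}. ln (1+g) * \<phi> g)"
proof -
  define s where "s = gb / ln gb"
  have lgb: "ln gb \<le> gb - 1" using gb by (rule ln_le_minus_one)
  have s1: "1 \<le> s" unfolding s_def using L lgb by (simp add: field_simps)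
  have g1: "1 \<le> gb"
  proof (rule ccontr)
    assume "\<not> 1 \<le> gb" then have "ln gb < 0" using gb by simp
    with L show False by simp
  qed
  have s2: "s \<le> gb" unfolding s_def using L gb g1 by (simp add: divide_le_eq mult_le_cancel_left1)
  have ls: "0 \<le> ln s" using s1 by simp
  have ii: "set_integrable lborel {0..} (\<lambda>g. indicator {0..s} g :: real)"
    unfolding set_integrable_def
  proof -
    have "(\<lambda>g. indicator {0..} g *\<^sub>R (indicator {0..s} g :: real)) = indicator {0..s}"
      by (auto simp: fun_eq_iff split: split_indicator)
    then show "integrable lborel (\<lambda>g. indicator {0..} g *\<^sub>R (indicator {0..s} g :: real))"
      by (simp add: emeasure_lborel_Icc_eq)
  qed
  have vi: "(LBINT g:{0..}. indicator {0..s} g :: real) = s"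
  proof -
    have "(\<lambda>g. indicator {0..} g *\<^sub>R (indicator {0..s} g :: real)) = indicator {0..s}"
      by (auto simp: fun_eq_iff split: split_indicator)
    then show ?thesis using s1 unfolding set_lebesgue_integral_def by simp
  qed
  have i1: "set_integrable lborel {0..} (\<lambda>g. ln s * \<phi> g)" using dens_int[OF d] by auto
  have i2: "set_integrable lborel {0..} (\<lambda>g. ln s * (D/gb) * indicator {0..s} g)" using ii by auto
  have "ln s * (1 - D / ln gb) = ln s * 1 - ln s * (D/gb) * s"
    unfolding s_def using gb L by (simp add: field_simps)
  also have "\<dots> = (LBINT g:{0..}. ln s * \<phi> g - ln s * (D/gb) * indicator {0..s} g)"
    using set_integral_diff(2)[OF i1 i2] dens_one[OF d] vi by simp
  also have "\<dots> \<le> (LBINT g:{0..}. ln (1+g) * \<phi> g)"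
  proof (rule set_integral_mono)
    show "set_integrable lborel {0..} (\<lambda>g. ln s * \<phi> g - ln s * (D/gb) * indicator {0..s} g)"
      by (rule set_integral_diff(1)[OF i1 i2])
    show "set_integrable lborel {0..} (\<lambda>g. ln (1+g) * \<phi> g)" by (rule dens_log_int[OF d])
    fix g :: real assume "g \<in> {0..}" then have g: "0 \<le> g" by simp
    have p: "0 \<le> \<phi> g" by (rule dens_nonneg[OF d g])
    show "ln s * \<phi> g - ln s * (D/gb) * indicator {0..s} g \<le> ln (1+g) * \<phi> g"
    proof (cases "g \<le> s")
      case True
      have "\<phi> g \<le> D/gb" using D[OF g] True s2 by simp
      then have "ln s * \<phi> g \<le> ln s * (D/gb)" using ls by (rule mult_left_mono)
      moreover have "0 \<le> ln (1+g) * \<phi> g" using g p by simp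
      ultimately show ?thesis using True g by simp
    next
      case False
      have "ln s \<le> ln (1+g)" using False s1 by (subst ln_le_cancel_iff) auto
      then have "ln s * \<phi> g \<le> ln (1+g) * \<phi> g" using p by (rule mult_right_mono)
      then show ?thesis using False by simp
    qed
  qed
  finally show ?thesis unfolding s_def .
qed



theorem abstract_main:
  fixes fB :: "real \<Rightarrow> real \<Rightarrow> real" and \<phi>E :: "real \<Rightarrow> real" and M D :: real
  assumes dB: "\<And>gb. 0 < gb \<Longrightarrow> dens (fB gb)" and dE: "dens \<phi>E"
    and M: "\<And>gb. 0 < gb \<Longrightarrow> (LBINT g:{0..}. g * fB gb g) \<le> M * gb"
    and D: "\<And>gb g. 0 < gb \<Longrightarrow> 0 \<le> g \<Longrightarrow> g \<le> gb \<Longrightarrow> fB gb g \<le> D / gb"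
  shows "((\<lambda>gB. ((LBINT g:{0..}. ln (1+g) * fB gB g * (LBINT t:{0..g}. \<phi>E t))
      + (LBINT g:{0..}. ln (1+g) * \<phi>E g * (LBINT t:{0..g}. fB gB t))
      - (LBINT g:{0..}. ln (1+g) * \<phi>E g)) / log 2 gB) \<longlongrightarrow> ln 2) at_top"
proof -
  define J where "J = (LBINT g:{0..}. ln (1+g) * \<phi>E g)"
  define C where "C gB = (LBINT g:{0..}. ln (1+g) * fB gB g * (LBINT t:{0..g}. \<phi>E t))
      + (LBINT g:{0..}. ln (1+g) * \<phi>E g * (LBINT t:{0..g}. fB gB t))
      - (LBINT g:{0..}. ln (1+g) * \<phi>E g)" for gB
  have bnd: "(ln (gB / ln gB) * (1 - D / ln gB) - 2*J) * ln 2 / ln gB \<le> C gB / log 2 gB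
      \<and> C gB / log 2 gB \<le> (ln (1+gB) + M) * ln 2 / ln gB" if gB: "exp 1 \<le> gB" for gB
  proof -
    have gb: "0 < gB" using gB by (meson exp_gt_zero less_le_trans)
    have L: "1 \<le> ln gB" using gB gb by (metis ln_exp ln_le_cancel_iff exp_gt_zero)
    define A where "A = (LBINT g:{0..}. ln (1+g) * fB gB g)"
    have d: "dens (fB gB)" by (rule dB[OF gb])
    note i1 = I1_bounds[OF d dE] and i2 = I2_bounds[OF dE d]
    have lowA: "ln (gB / ln gB) * (1 - D / ln gB) \<le> A"
      unfolding A_def by (rule A_lower[OF d gb L]) (rule D[OF gb])
    have upA: "A \<le> ln (1+gB) + M" unfolding A_def by (rule A_upper[OF d gb M[OF gb]])
    have Cl: "A - 2*J \<le> C gB" using i1(3) i2(2) unfolding C_def A_def J_def by linarith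
    have Cu: "C gB \<le> A" using i1(2) i2(3) unfolding C_def A_def J_def by linarith
    have eq: "C gB / log 2 gB = C gB * ln 2 / ln gB" by (simp add: log_def)
    have p: "0 < ln 2 / ln gB" using L by simp
    have "(ln (gB / ln gB) * (1 - D / ln gB) - 2*J) * (ln 2 / ln gB) \<le> C gB * (ln 2 / ln gB)"
      using lowA Cl p by (intro mult_right_mono) auto
    moreover have "C gB * (ln 2 / ln gB) \<le> (ln (1+gB) + M) * (ln 2 / ln gB)"
      using upA Cu p by (intro mult_right_mono) auto
    ultimately show ?thesis unfolding eq by simp
  qed
  have lim1: "((\<lambda>x::real. (ln (x / ln x) * (1 - D / ln x) - 2*J) * ln 2 / ln x) \<longlongrightarrow> ln 2) at_top"
    by real_asymp
  have lim2: "((\<lambda>x::real. (ln (1+x) + M) * ln 2 / ln x) \<longlongrightarrow> ln 2) at_top"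
    by real_asymp
  have ev: "eventually (\<lambda>gB::real. exp 1 \<le> gB) at_top" using eventually_ge_at_top[of "exp 1"] by simp
  have "((\<lambda>gB. C gB / log 2 gB) \<longlongrightarrow> ln 2) at_top"
  proof (rule tendsto_sandwich[OF _ _ lim1 lim2])
    show "eventually (\<lambda>gB. (ln (gB / ln gB) * (1 - D / ln gB) - 2*J) * ln 2 / ln gB \<le> C gB / log 2 gB) at_top"
      using ev by eventually_elim (use bnd in blast)
    show "eventually (\<lambda>gB. C gB / log 2 gB \<le> (ln (1+gB) + M) * ln 2 / ln gB) at_top"
      using ev by eventually_elim (use bnd in blast)
  qed
  then show ?thesis unfolding C_def .
qed



lemma set_from_nn:
  fixes f :: "real \<Rightarrow> real"
  assumes fm: "f \<in> borel_measurable borel" and nn: "\<And>x. 0 \<le> x \<Longrightarrow> 0 \<le> f x" and r: "0 \<le> r"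
    and eq: "(\<integral>\<^sup>+x. ennreal (f x) * indicator {0..} x \<partial>lborel) = ennreal r"
  shows "set_integrable lborel {0..} f" "(LBINT x:{0..}. f x) = r"
proof -
  have [measurable]: "f \<in> borel_measurable borel" by (rule fm)
  have e2: "(\<integral>\<^sup>+x. ennreal (indicator {0..} x *\<^sub>R f x) \<partial>lborel) = ennreal r"
    using eq by (subst nn_integral_cong[where v="\<lambda>x. ennreal (f x) * indicator {0..} x"]) (auto split: split_indicator)
  have hb: "has_bochner_integral lborel (\<lambda>x. indicator {0..} x *\<^sub>R f x) r"
    by (rule has_bochner_integral_nn_integral[OF _ _ r e2]) (auto intro!: AE_I2 simp: nn split: split_indicator)
  show "set_integrable lborel {0..} f" unfolding set_integrable_def
    using hb by (metis has_bochner_integral_iff)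
  show "(LBINT x:{0..}. f x) = r" unfolding set_lebesgue_integral_def
    using hb by (metis has_bochner_integral_iff)
qed

lemma fRS_eq:
  assumes gb: "0 < gb" and mk: "0 < m + Kr"
  shows "fRS p m K1 K2 gb Kr g = ((1 + Kbar p K1 K2) / gb * (m / (m + Kr)) powr m) *
     (exp (- ((1 + Kbar p K1 K2) / gb) * g) * hyp1F1 m 1 ((Kr / (m + Kr) * (1 + Kbar p K1 K2) / gb) * g))"
proof -
  have "Kr * (1 + Kbar p K1 K2) * g / (gb * (m + Kr)) = (Kr / (m + Kr) * (1 + Kbar p K1 K2) / gb) * g"
    using gb mk by (simp add: field_simps)
  moreover have "- (1 + Kbar p K1 K2) * g / gb = - ((1 + Kbar p K1 K2) / gb) * g" using gb by (simp add: field_simps)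
  ultimately show ?thesis unfolding fRS_def by (simp only: mult.assoc)
qed

lemma rs_good:
  assumes m: "0 < m" and Kr: "0 < Kr" and k: "0 < 1 + Kbar p K1 K2"
  shows "\<exists>M D. \<forall>gb>0. dens (fRS p m K1 K2 gb Kr) \<and> (LBINT g:{0..}. g * fRS p m K1 K2 gb Kr g) \<le> M * gb
           \<and> (\<forall>g. 0 \<le> g \<longrightarrow> g \<le> gb \<longrightarrow> fRS p m K1 K2 gb Kr g \<le> D / gb)"
proof -
  define k where "k = 1 + Kbar p K1 K2"
  define \<beta> where "\<beta> = Kr / (m + Kr)"
  define c where "c = (m / (m + Kr)) powr m"
  define \<theta> where "\<theta> = k * (1 - \<beta>) / 2"
  have kp: "0 < k" using k by (simp add: k_def)
  have b0: "0 < \<beta>" "\<beta> < 1" using m Kr by (auto simp: \<beta>_def field_simps)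
  have cp: "0 < c" using m Kr by (simp add: c_def)
  have thp: "0 < \<theta>" using kp b0 by (simp add: \<theta>_def)
  have kth: "\<beta> * k < k - \<theta>"
  proof -
    have "k - \<theta> - \<beta> * k = k * (1 - \<beta>) / 2" by (simp add: \<theta>_def field_simps)
    moreover have "0 < k * (1 - \<beta>) / 2" using kp b0 by simp
    ultimately show ?thesis by linarith
  qed
  have kth0: "0 < k - \<theta>" using kth kp b0 by (smt (verit) mult_pos_pos)
  define V where "V = k / (k - \<theta>) * c * (1 - \<beta> * k / (k - \<theta>)) powr (-m)"
  define D where "D = k * c * hyp1F1 m 1 (\<beta> * k)"
  have V0: "0 \<le> V" using kp cp kth0 by (simp add: V_def)
  have eqf: "fRS p m K1 K2 gb Kr g = (k / gb * c) * (exp (- (k / gb) * g) * hyp1F1 m 1 ((\<beta> * k / gb) * g))"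
    if "0 < gb" for gb g
    using fRS_eq[OF that, of m Kr p K1 K2 g] m Kr unfolding k_def \<beta>_def c_def by (simp add: mult.assoc)
  have "\<forall>gb>0. dens (fRS p m K1 K2 gb Kr) \<and> (LBINT g:{0..}. g * fRS p m K1 K2 gb Kr g) \<le> V / \<theta> * gb
           \<and> (\<forall>g. 0 \<le> g \<longrightarrow> g \<le> gb \<longrightarrow> fRS p m K1 K2 gb Kr g \<le> D / gb)"
  proof (intro allI impI)
    fix gb :: real assume gb: "0 < gb"
    let ?f = "fRS p m K1 K2 gb Kr"
    have [measurable]: "?f \<in> borel_measurable borel"
      unfolding fRS_def by measurable
    have nn: "0 \<le> ?f g" if "0 \<le> g" for g
      unfolding eqf[OF gb] using kp cp gb that b0 m
      by (intro mult_nonneg_nonneg hyp_nonneg) auto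
    have bl: "\<beta> * k / gb < k / gb" using b0 kp gb by (simp add: divide_strict_right_mono)
    have "(\<integral>\<^sup>+x. ennreal (?f x) * indicator {0..} x \<partial>lborel)
        = (\<integral>\<^sup>+x. ennreal (k / gb * c) * (ennreal (exp (- (k / gb) * x) * hyp1F1 m 1 ((\<beta> * k / gb) * x)) * indicator {0..} x) \<partial>lborel)"
    proof (intro nn_integral_cong)
      fix x :: real
      have a0: "0 \<le> k / gb * c" using kp cp gb by simp
      show "ennreal (?f x) * indicator {0..} x = ennreal (k / gb * c) * (ennreal (exp (- (k / gb) * x) * hyp1F1 m 1 ((\<beta> * k / gb) * x)) * indicator {0..} x)"
        unfolding eqf[OF gb] ennreal_mult'[OF a0] by (simp only: mult.assoc)
    qed
    also have "\<dots> = ennreal (k / gb * c) * ennreal ((1 / (k/gb)) * (1 - (\<beta> * k / gb) / (k / gb)) powr (-m))"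
      using kp gb b0 by (subst nn_integral_cmult, simp, subst core[OF m _ _ bl], simp_all)
    also have "\<dots> = ennreal 1"
    proof -
      have "(\<beta> * k / gb) / (k / gb) = \<beta>" using kp gb by simp
      moreover have "1 - \<beta> = m / (m + Kr)" using m Kr by (simp add: \<beta>_def field_simps)
      ultimately have "(1 - (\<beta> * k / gb) / (k / gb)) = m / (m + Kr)" by simp
      then have "k / gb * c * ((1 / (k/gb)) * (1 - (\<beta> * k / gb) / (k / gb)) powr (-m))
          = ((m / (m + Kr)) powr m * (m / (m + Kr)) powr (-m)) * (k / gb * (1 / (k/gb)))"
        by (simp only: c_def ac_simps)
      also have "(m / (m + Kr)) powr m * (m / (m + Kr)) powr (-m) = 1"
        using m Kr by (simp add: powr_minus)
      also have "k / gb * (1 / (k/gb)) = 1" using kp gb by simp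
      finally have "k / gb * c * ((1 / (k/gb)) * (1 - (\<beta> * k / gb) / (k / gb)) powr (-m)) = 1" by simp
      then show ?thesis using kp gb cp by (subst ennreal_mult'[symmetric]) auto
    qed
    finally have n1: "(\<integral>\<^sup>+x. ennreal (?f x) * indicator {0..} x \<partial>lborel) = ennreal 1" .
    note s1 = set_from_nn[OF _ nn _ n1]
    have lth: "\<beta> * k / gb < (k - \<theta>) / gb" using kth gb by (simp add: divide_strict_right_mono)
    have lth0: "0 < (k - \<theta>) / gb" using kth0 gb by simp
    have "(\<integral>\<^sup>+x. ennreal (x * ?f x) * indicator {0..} x \<partial>lborel)
        \<le> (\<integral>\<^sup>+x. ennreal (gb / \<theta> * (k / gb * c)) * (ennreal (exp (- ((k - \<theta>) / gb) * x) * hyp1F1 m 1 ((\<beta> * k / gb) * x)) * indicator {0..} x) \<partial>lborel)"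
    proof (intro nn_integral_mono)
      fix x :: real
      show "ennreal (x * ?f x) * indicator {0..} x
          \<le> ennreal (gb / \<theta> * (k / gb * c)) * (ennreal (exp (- ((k - \<theta>) / gb) * x) * hyp1F1 m 1 ((\<beta> * k / gb) * x)) * indicator {0..} x)"
      proof (cases "0 \<le> x")
        case True
        have H: "0 \<le> hyp1F1 m 1 ((\<beta> * k / gb) * x)" using True b0 kp gb m by (intro hyp_nonneg) auto
        have xe: "x \<le> gb / \<theta> * exp (\<theta> / gb * x)"
        proof -
          have "\<theta> / gb * x \<le> exp (\<theta> / gb * x)" by (rule order.trans[OF _ exp_ge_add_one_self]) simp
          then have "\<theta> / gb * x * (gb / \<theta>) \<le> exp (\<theta> / gb * x) * (gb / \<theta>)"
            using gb thp by (intro mult_right_mono) auto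
          then show ?thesis using gb thp by (simp add: field_simps)
        qed
        have ex: "exp (\<theta> / gb * x) * exp (- (k / gb) * x) = exp (- ((k - \<theta>) / gb) * x)"
          using gb by (simp add: exp_add[symmetric] field_simps add_divide_distrib[symmetric])
        have "x * ?f x = (k / gb * c) * (x * exp (- (k / gb) * x)) * hyp1F1 m 1 ((\<beta> * k / gb) * x)"
          unfolding eqf[OF gb] by (simp add: ac_simps)
        also have "\<dots> \<le> (k / gb * c) * ((gb / \<theta> * exp (\<theta> / gb * x)) * exp (- (k / gb) * x)) * hyp1F1 m 1 ((\<beta> * k / gb) * x)"
          using xe kp gb cp H by (intro mult_right_mono mult_left_mono) auto
        also have "\<dots> = gb / \<theta> * (k / gb * c) * (exp (- ((k - \<theta>) / gb) * x) * hyp1F1 m 1 ((\<beta> * k / gb) * x))"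
          by (subst ex[symmetric]) (simp add: ac_simps)
        finally have le: "x * ?f x \<le> gb / \<theta> * (k / gb * c) * (exp (- ((k - \<theta>) / gb) * x) * hyp1F1 m 1 ((\<beta> * k / gb) * x))" .
        have "ennreal (x * ?f x) \<le> ennreal (gb / \<theta> * (k / gb * c) * (exp (- ((k - \<theta>) / gb) * x) * hyp1F1 m 1 ((\<beta> * k / gb) * x)))"
          using le by (rule ennreal_leI)
        also have "\<dots> = ennreal (gb / \<theta> * (k / gb * c)) * ennreal (exp (- ((k - \<theta>) / gb) * x) * hyp1F1 m 1 ((\<beta> * k / gb) * x))"
          using gb thp kp cp by (intro ennreal_mult') auto
        finally show ?thesis using True by simp
      qed simp
    qed
    also have "\<dots> = ennreal (gb / \<theta> * (k / gb * c)) * ennreal ((1 / ((k - \<theta>)/gb)) * (1 - (\<beta> * k / gb) / ((k - \<theta>) / gb)) powr (-m))"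
      using kp gb b0 by (subst nn_integral_cmult, simp, subst core[OF m lth0 _ lth], simp_all)
    also have "\<dots> = ennreal (V / \<theta> * gb)"
    proof -
      have "(\<beta> * k / gb) / ((k - \<theta>) / gb) = \<beta> * k / (k - \<theta>)" using gb by simp
      then have "gb / \<theta> * (k / gb * c) * ((1 / ((k - \<theta>)/gb)) * (1 - (\<beta> * k / gb) / ((k - \<theta>) / gb)) powr (-m)) = V / \<theta> * gb"
        using gb thp kth0 by (simp add: V_def field_simps)
      then show ?thesis using kp gb cp thp by (subst ennreal_mult'[symmetric]) auto
    qed
    finally have mle: "(\<integral>\<^sup>+x. ennreal (x * ?f x) * indicator {0..} x \<partial>lborel) \<le> ennreal (V / \<theta> * gb)" .
    then obtain r where r: "(\<integral>\<^sup>+x. ennreal (x * ?f x) * indicator {0..} x \<partial>lborel) = ennreal r" "0 \<le> r" "r \<le> V / \<theta> * gb"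
      using V0 thp gb by (cases "(\<integral>\<^sup>+x. ennreal (x * ?f x) * indicator {0..} x \<partial>lborel)") (auto simp: ennreal_le_iff top_unique)
    have nnm: "0 \<le> x * ?f x" if "0 \<le> x" for x using nn[OF that] that by simp
    note s2 = set_from_nn[OF _ nnm r(2) r(1)]
    have P1: "dens ?f" unfolding dens_def using s1 s2 nn by auto
    have P2: "(LBINT g:{0..}. g * ?f g) \<le> V / \<theta> * gb" using s2(2) r(3) by simp
    have P3: "?f g \<le> D / gb" if g: "0 \<le> g" "g \<le> gb" for g
    proof -
    have "hyp1F1 m 1 ((\<beta> * k / gb) * g) \<le> hyp1F1 m 1 (\<beta> * k)"
    proof (rule hyp_mono[OF m])
      show "0 \<le> \<beta> * k / gb * g" using b0 kp gb g by simp
      have "\<beta> * k / gb * g \<le> \<beta> * k / gb * gb" using b0 kp gb g by (intro mult_left_mono) auto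
      then show "\<beta> * k / gb * g \<le> \<beta> * k" using gb by simp
    qed
    moreover have "exp (- (k / gb) * g) \<le> 1" using kp gb g by simp
    moreover have "0 \<le> hyp1F1 m 1 ((\<beta> * k / gb) * g)" using b0 kp gb g m by (intro hyp_nonneg) auto
    ultimately have "exp (- (k / gb) * g) * hyp1F1 m 1 ((\<beta> * k / gb) * g) \<le> 1 * hyp1F1 m 1 (\<beta> * k)"
      by (intro mult_mono) auto
    then have "(k / gb * c) * (exp (- (k / gb) * g) * hyp1F1 m 1 ((\<beta> * k / gb) * g)) \<le> (k / gb * c) * hyp1F1 m 1 (\<beta> * k)"
      using kp gb cp by (intro mult_left_mono) auto
    then show "?f g \<le> D / gb" unfolding eqf[OF gb] D_def by simp
    qed
    show "dens ?f \<and> (LBINT g:{0..}. g * ?f g) \<le> V / \<theta> * gb \<and> (\<forall>g. 0 \<le> g \<longrightarrow> g \<le> gb \<longrightarrow> ?f g \<le> D / gb)"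
      using P1 P2 P3 by blast
  qed
  then show ?thesis by blast
qed



lemma dens_mix:
  assumes d1: "dens f1" and d2: "dens f2" and p: "0 \<le> p" "p \<le> 1"
  shows "dens (\<lambda>g. p * f1 g + (1 - p) * f2 g)"
proof -
  have [measurable]: "f1 \<in> borel_measurable borel" "f2 \<in> borel_measurable borel"
    using d1 d2 by (auto intro: dens_meas)
  have i1: "set_integrable lborel {0..} (\<lambda>g. p * f1 g)" using dens_int[OF d1] by auto
  have i2: "set_integrable lborel {0..} (\<lambda>g. (1 - p) * f2 g)" using dens_int[OF d2] by auto
  have j1: "set_integrable lborel {0..} (\<lambda>g. p * (g * f1 g))" using dens_mom[OF d1] by auto
  have j2: "set_integrable lborel {0..} (\<lambda>g. (1 - p) * (g * f2 g))" using dens_mom[OF d2] by auto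
  have fe: "(\<lambda>g. g * (p * f1 g + (1 - p) * f2 g)) = (\<lambda>g. p * (g * f1 g) + (1 - p) * (g * f2 g))"
    by (auto simp: fun_eq_iff algebra_simps)
  show ?thesis unfolding dens_def
  proof (intro conjI allI impI)
    show "(\<lambda>g. p * f1 g + (1 - p) * f2 g) \<in> borel_measurable borel" by measurable
    fix g :: real assume "0 \<le> g"
    then show "0 \<le> p * f1 g + (1 - p) * f2 g"
      using p dens_nonneg[OF d1] dens_nonneg[OF d2] by (intro add_nonneg_nonneg mult_nonneg_nonneg) auto
  next
    show "set_integrable lborel {0..} (\<lambda>g. p * f1 g + (1 - p) * f2 g)" by (rule set_integral_add(1)[OF i1 i2])
    show "(LBINT g:{0..}. p * f1 g + (1 - p) * f2 g) = 1"
      using set_integral_add(2)[OF i1 i2] dens_one[OF d1] dens_one[OF d2] by simp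
    show "set_integrable lborel {0..} (\<lambda>g. g * (p * f1 g + (1 - p) * f2 g))"
      unfolding fe by (rule set_integral_add(1)[OF j1 j2])
  qed
qed

lemma mix_mom:
  assumes d1: "dens f1" and d2: "dens f2"
  shows "(LBINT g:{0..}. g * (p * f1 g + (1 - p) * f2 g)) = p * (LBINT g:{0..}. g * f1 g) + (1 - p) * (LBINT g:{0..}. g * f2 g)"
proof -
  have j1: "set_integrable lborel {0..} (\<lambda>g. p * (g * f1 g))" using dens_mom[OF d1] by auto
  have j2: "set_integrable lborel {0..} (\<lambda>g. (1 - p) * (g * f2 g))" using dens_mom[OF d2] by auto
  have fe: "(\<lambda>g. g * (p * f1 g + (1 - p) * f2 g)) = (\<lambda>g. p * (g * f1 g) + (1 - p) * (g * f2 g))"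
    by (auto simp: fun_eq_iff algebra_simps)
  show ?thesis unfolding fe using set_integral_add(2)[OF j1 j2] by simp
qed

lemma ars_good:
  assumes p: "0 \<le> p" "p \<le> 1" and m: "0 < m" and K: "0 < K1" "0 < K2"
  shows "\<exists>M D. \<forall>gb>0. dens (ars_pdf p m K1 K2 gb) \<and> (LBINT g:{0..}. g * ars_pdf p m K1 K2 gb g) \<le> M * gb
           \<and> (\<forall>g. 0 \<le> g \<longrightarrow> g \<le> gb \<longrightarrow> ars_pdf p m K1 K2 gb g \<le> D / gb)"
proof -
  have k: "0 < 1 + Kbar p K1 K2"
  proof -
    have "0 \<le> Kbar p K1 K2" using p K unfolding Kbar_def by (intro add_nonneg_nonneg mult_nonneg_nonneg) auto
    then show ?thesis by simp
  qed
  obtain M1 D1 where R1: "\<forall>gb>0. dens (fRS p m K1 K2 gb K1) \<and> (LBINT g:{0..}. g * fRS p m K1 K2 gb K1 g) \<le> M1 * gb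
           \<and> (\<forall>g. 0 \<le> g \<longrightarrow> g \<le> gb \<longrightarrow> fRS p m K1 K2 gb K1 g \<le> D1 / gb)"
    using rs_good[OF m K(1) k] by blast
  obtain M2 D2 where R2: "\<forall>gb>0. dens (fRS p m K1 K2 gb K2) \<and> (LBINT g:{0..}. g * fRS p m K1 K2 gb K2 g) \<le> M2 * gb
           \<and> (\<forall>g. 0 \<le> g \<longrightarrow> g \<le> gb \<longrightarrow> fRS p m K1 K2 gb K2 g \<le> D2 / gb)"
    using rs_good[OF m K(2) k] by blast
  have af: "ars_pdf p m K1 K2 gb = (\<lambda>g. p * fRS p m K1 K2 gb K1 g + (1 - p) * fRS p m K1 K2 gb K2 g)" for gb
    by (simp add: fun_eq_iff ars_pdf_def)
  show ?thesis
  proof (rule exI[of _ "p * M1 + (1 - p) * M2"], rule exI[of _ "p * D1 + (1 - p) * D2"], intro allI impI)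
    fix gb :: real assume gb: "0 < gb"
    have d1: "dens (fRS p m K1 K2 gb K1)" and d2: "dens (fRS p m K1 K2 gb K2)" using R1 R2 gb by auto
    have A: "dens (ars_pdf p m K1 K2 gb)" unfolding af by (rule dens_mix[OF d1 d2 p])
    have "(LBINT g:{0..}. g * ars_pdf p m K1 K2 gb g) = p * (LBINT g:{0..}. g * fRS p m K1 K2 gb K1 g) + (1 - p) * (LBINT g:{0..}. g * fRS p m K1 K2 gb K2 g)"
      unfolding af by (rule mix_mom[OF d1 d2])
    also have "\<dots> \<le> p * (M1 * gb) + (1 - p) * (M2 * gb)"
      using R1 R2 gb p by (intro add_mono mult_left_mono) auto
    also have "\<dots> = (p * M1 + (1 - p) * M2) * gb" by (simp add: algebra_simps)
    finally have B: "(LBINT g:{0..}. g * ars_pdf p m K1 K2 gb g) \<le> (p * M1 + (1 - p) * M2) * gb" .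
    have C: "ars_pdf p m K1 K2 gb g \<le> (p * D1 + (1 - p) * D2) / gb" if g: "0 \<le> g" "g \<le> gb" for g
    proof -
      have "p * fRS p m K1 K2 gb K1 g + (1 - p) * fRS p m K1 K2 gb K2 g \<le> p * (D1 / gb) + (1 - p) * (D2 / gb)"
        using R1 R2 gb p g by (intro add_mono mult_left_mono) auto
      then show ?thesis unfolding ars_pdf_def by (simp add: add_divide_distrib)
    qed
    show "dens (ars_pdf p m K1 K2 gb) \<and> (LBINT g:{0..}. g * ars_pdf p m K1 K2 gb g) \<le> (p * M1 + (1 - p) * M2) * gb
           \<and> (\<forall>g. 0 \<le> g \<longrightarrow> g \<le> gb \<longrightarrow> ars_pdf p m K1 K2 gb g \<le> (p * D1 + (1 - p) * D2) / gb)"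
      using A B C by blast
  qed
qed

lemma ars_cdf_eq:
  assumes "dens (fRS p m K1 K2 gb K1)" "dens (fRS p m K1 K2 gb K2)"
  shows "ars_cdf p m K1 K2 gb x = (LBINT t:{0..x}. ars_pdf p m K1 K2 gb t)"
proof -
  have i1: "set_integrable lborel {0..x} (\<lambda>t. p * fRS p m K1 K2 gb K1 t)" using dens_int_Icc[OF assms(1)] by auto
  have i2: "set_integrable lborel {0..x} (\<lambda>t. (1 - p) * fRS p m K1 K2 gb K2 t)" using dens_int_Icc[OF assms(2)] by auto
  show ?thesis unfolding ars_cdf_def ars_pdf_def FRS_def using set_integral_add(2)[OF i1 i2] by simp
qed



lemma kpos: "0 \<le> p \<Longrightarrow> p \<le> 1 \<Longrightarrow> 0 < K1 \<Longrightarrow> 0 < K2 \<Longrightarrow> 0 < 1 + Kbar p K1 K2"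
proof -
  assume a: "0 \<le> p" "p \<le> 1" "0 < K1" "0 < K2"
  have "0 \<le> Kbar p K1 K2" using a unfolding Kbar_def by (intro add_nonneg_nonneg mult_nonneg_nonneg) auto
  then show ?thesis by simp
qed

theorem mainTheorem9:
  fixes pB mB KB1 KB2 pE mE KE1 KE2 gE :: real
  assumes "0 \<le> pB" "pB \<le> 1" "0 < mB" "0 < KB1" "0 < KB2"
      and "0 \<le> pE" "pE \<le> 1" "0 < mE" "0 < KE1" "0 < KE2" "0 < gE"
  shows "((\<lambda>gB. avg_secrecy_capacity pB mB KB1 KB2 gB pE mE KE1 KE2 gE / log 2 gB)
           \<longlongrightarrow> ln 2) at_top"
proof -
  obtain MB DB where GB: "\<forall>gb>0. dens (ars_pdf pB mB KB1 KB2 gb) \<and> (LBINT g:{0..}. g * ars_pdf pB mB KB1 KB2 gb g) \<le> MB * gb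
           \<and> (\<forall>g. 0 \<le> g \<longrightarrow> g \<le> gb \<longrightarrow> ars_pdf pB mB KB1 KB2 gb g \<le> DB / gb)"
    using ars_good[OF assms(1-5)] by blast
  obtain ME DE where GE: "\<forall>gb>0. dens (ars_pdf pE mE KE1 KE2 gb) \<and> (LBINT g:{0..}. g * ars_pdf pE mE KE1 KE2 gb g) \<le> ME * gb
           \<and> (\<forall>g. 0 \<le> g \<longrightarrow> g \<le> gb \<longrightarrow> ars_pdf pE mE KE1 KE2 gb g \<le> DE / gb)"
    using ars_good[OF assms(6-10)] by blast
  have kB: "0 < 1 + Kbar pB KB1 KB2" using assms by (intro kpos) auto
  have kE: "0 < 1 + Kbar pE KE1 KE2" using assms by (intro kpos) auto
  obtain a1 b1 where RB1: "\<forall>gb>0. dens (fRS pB mB KB1 KB2 gb KB1) \<and> (LBINT g:{0..}. g * fRS pB mB KB1 KB2 gb KB1 g) \<le> a1 * gb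
           \<and> (\<forall>g. 0 \<le> g \<longrightarrow> g \<le> gb \<longrightarrow> fRS pB mB KB1 KB2 gb KB1 g \<le> b1 / gb)"
    using rs_good[OF assms(3) assms(4) kB] by blast
  obtain a2 b2 where RB2: "\<forall>gb>0. dens (fRS pB mB KB1 KB2 gb KB2) \<and> (LBINT g:{0..}. g * fRS pB mB KB1 KB2 gb KB2 g) \<le> a2 * gb
           \<and> (\<forall>g. 0 \<le> g \<longrightarrow> g \<le> gb \<longrightarrow> fRS pB mB KB1 KB2 gb KB2 g \<le> b2 / gb)"
    using rs_good[OF assms(3) assms(5) kB] by blast
  obtain a3 b3 where RE1: "\<forall>gb>0. dens (fRS pE mE KE1 KE2 gb KE1) \<and> (LBINT g:{0..}. g * fRS pE mE KE1 KE2 gb KE1 g) \<le> a3 * gb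
           \<and> (\<forall>g. 0 \<le> g \<longrightarrow> g \<le> gb \<longrightarrow> fRS pE mE KE1 KE2 gb KE1 g \<le> b3 / gb)"
    using rs_good[OF assms(8) assms(9) kE] by blast
  obtain a4 b4 where RE2: "\<forall>gb>0. dens (fRS pE mE KE1 KE2 gb KE2) \<and> (LBINT g:{0..}. g * fRS pE mE KE1 KE2 gb KE2 g) \<le> a4 * gb
           \<and> (\<forall>g. 0 \<le> g \<longrightarrow> g \<le> gb \<longrightarrow> fRS pE mE KE1 KE2 gb KE2 g \<le> b4 / gb)"
    using rs_good[OF assms(8) assms(10) kE] by blast
  have cdfE: "ars_cdf pE mE KE1 KE2 gE x = (LBINT t:{0..x}. ars_pdf pE mE KE1 KE2 gE t)" for x
    using RE1 RE2 assms(11) by (intro ars_cdf_eq) auto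
  have cdfB: "ars_cdf pB mB KB1 KB2 gB x = (LBINT t:{0..x}. ars_pdf pB mB KB1 KB2 gB t)" if "0 < gB" for gB x
    using RB1 RB2 that by (intro ars_cdf_eq) auto
  have lim: "((\<lambda>gB. ((LBINT g:{0..}. ln (1+g) * ars_pdf pB mB KB1 KB2 gB g * (LBINT t:{0..g}. ars_pdf pE mE KE1 KE2 gE t))
      + (LBINT g:{0..}. ln (1+g) * ars_pdf pE mE KE1 KE2 gE g * (LBINT t:{0..g}. ars_pdf pB mB KB1 KB2 gB t))
      - (LBINT g:{0..}. ln (1+g) * ars_pdf pE mE KE1 KE2 gE g)) / log 2 gB) \<longlongrightarrow> ln 2) at_top"
  proof (rule abstract_main[where fB="\<lambda>gb. ars_pdf pB mB KB1 KB2 gb" and \<phi>E="ars_pdf pE mE KE1 KE2 gE" and M=MB and D=DB])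
    show "\<And>gb. 0 < gb \<Longrightarrow> dens (ars_pdf pB mB KB1 KB2 gb)" using GB by blast
    show "dens (ars_pdf pE mE KE1 KE2 gE)" using GE assms(11) by blast
    show "\<And>gb. 0 < gb \<Longrightarrow> (LBINT g:{0..}. g * ars_pdf pB mB KB1 KB2 gb g) \<le> MB * gb" using GB by blast
    show "\<And>gb g. 0 < gb \<Longrightarrow> 0 \<le> g \<Longrightarrow> g \<le> gb \<Longrightarrow> ars_pdf pB mB KB1 KB2 gb g \<le> DB / gb" using GB by blast
  qed
  have ev: "eventually (\<lambda>gB. ((LBINT g:{0..}. ln (1+g) * ars_pdf pB mB KB1 KB2 gB g * (LBINT t:{0..g}. ars_pdf pE mE KE1 KE2 gE t))
      + (LBINT g:{0..}. ln (1+g) * ars_pdf pE mE KE1 KE2 gE g * (LBINT t:{0..g}. ars_pdf pB mB KB1 KB2 gB t))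
      - (LBINT g:{0..}. ln (1+g) * ars_pdf pE mE KE1 KE2 gE g)) / log 2 gB
      = avg_secrecy_capacity pB mB KB1 KB2 gB pE mE KE1 KE2 gE / log 2 gB) at_top"
    using eventually_gt_at_top[of "0::real"]
  proof eventually_elim
    case (elim gB)
    show ?case unfolding avg_secrecy_capacity_def cdfE cdfB[OF elim] ..
  qed
  show ?thesis using tendsto_cong[OF ev] lim by blast
qed

end
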